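(* Let $\Lambda$ be a lattice and $\Lambda'\subseteq\Lambda$ a sublattice of index $p^\alpha q$, where $\alpha\ge 0$ and $q$ is not divisible by $p$. Then there exists a unique sublattice $\Lambda''$ of index $q$ in $\Lambda$ with $\Lambda'\subseteq\Lambda''\subseteq\Lambda$. Moreover, for every $t\ge1$ and every $\bar a=(a_1,\ldots,a_t)\in(\mathcal F^0(\Lambda,K))^t$, $$\mathrm{CharPoly}_{\bar a,\Lambda'}=\big(\mathrm{CharPoly}_{\bar a,\Lambda''}\big)^{p^\alpha}.$$
   Context: $K$ is a field of characteristic $p>0$. A lattice is a free abelian group of finite rank. For an abelian group $G$, $\mathcal F(G,K)$ is the space of all functions $G\to K$ and $\mathcal F^0(G,K)$ the subspace of finitely supported ones. For $f\in\mathcal F(G,K)$, $a\in\mathcal F^0(G,K)$, $(f*a)(g)=\sum_{h\in G}f(h)a(g-h)$ and $\Delta_a f=f*a$. For a finite-index sublattice $\Lambda'\subseteq\Lambda$, $\mathcal F_{\Lambda'}(\Lambda,K)$ is the (finite-dimensional, $\Delta_a$-stable) space of functions $f$ with $f(v+w)=f(v)$ for all $v\in\Lambda$, $w\in\Lambda'$. $\mathrm{CharPoly}_{\bar a,\Lambda'}$ is the monic gcd of the characteristic polynomials of $\Delta_{a_j}|_{\mathcal F_{\Lambda'}(\Lambda,K)}$, $j=1,\ldots,t$. *)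

theory Defs
  imports "HOL-Library.Function_Algebras" "HOL-Computational_Algebra.Polynomial_Factorial"
          "Jordan_Normal_Form.Char_Poly"
begin

text \<open>The lattice Lambda is modelled as Z^n = ('n => int) for a finite index type 'n.
  Sublattices are subgroups.\<close>

definition sublattice :: "('n::finite \<Rightarrow> int) set \<Rightarrow> bool" where
  "sublattice L \<longleftrightarrow> 0 \<in> L \<and> (\<forall>x\<in>L. \<forall>y\<in>L. x + y \<in> L) \<and> (\<forall>x\<in>L. - x \<in> L)"

text \<open>Index of L in Z^n: number of cosets (0 if infinite).\<close>
definition lat_index :: "('n::finite \<Rightarrow> int) set \<Rightarrow> nat" where
  "lat_index L = card ((\<lambda>v. (\<lambda>w. v + w) ` L) ` UNIV)"

definition fin_supp :: "(('n \<Rightarrow> int) \<Rightarrow> 'k::zero) \<Rightarrow> bool" where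
  "fin_supp a \<longleftrightarrow> finite {x. a x \<noteq> 0}"

definition conv :: "(('n::finite \<Rightarrow> int) \<Rightarrow> 'k::field) \<Rightarrow> (('n \<Rightarrow> int) \<Rightarrow> 'k) \<Rightarrow> ('n \<Rightarrow> int) \<Rightarrow> 'k" where
  "conv f a g = (\<Sum>h\<in>{h. a (g - h) \<noteq> 0}. f h * a (g - h))"

definition periodic_funs :: "('n::finite \<Rightarrow> int) set \<Rightarrow> (('n \<Rightarrow> int) \<Rightarrow> 'k::field) set" where
  "periodic_funs L = {f. \<forall>v. \<forall>w\<in>L. f (v + w) = f v}"

definition fscale :: "'k::field \<Rightarrow> ('a \<Rightarrow> 'k) \<Rightarrow> ('a \<Rightarrow> 'k)" where
  "fscale c f = (\<lambda>x. c * f x)"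

definition charpoly_on :: "(('a \<Rightarrow> 'k::field) set) \<Rightarrow> (('a \<Rightarrow> 'k) \<Rightarrow> ('a \<Rightarrow> 'k)) \<Rightarrow> 'k poly" where
  "charpoly_on V T =
    (let bs = (SOME bs. distinct bs \<and> \<not> module.dependent fscale (set bs)
                        \<and> module.span fscale (set bs) = V)
     in char_poly (mat (length bs) (length bs)
           (\<lambda>(i, j). module.representation fscale (set bs) (T (bs ! j)) (bs ! i))))"

definition CharPoly :: "(('n::finite \<Rightarrow> int) \<Rightarrow> 'k::field_gcd) list \<Rightarrow> ('n \<Rightarrow> int) set \<Rightarrow> 'k poly" where
  "CharPoly as L = Gcd (set (map (\<lambda>a. charpoly_on (periodic_funs L) (\<lambda>f. conv f a)) as))"

end

theory Submission
  imports Defs "HOL-Library.Poly_Mapping"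
begin

section \<open>Frobenius\<close>

lemma frob_p:
  fixes x y :: "'a::comm_ring_1"
  assumes p: "prime p" and z: "of_nat p = (0::'a)"
  shows "(x + y) ^ p = x ^ p + y ^ p"
proof -
  have p0: "p > 0" using p prime_gt_0_nat by blast
  have "(x + y) ^ p = (\<Sum>k\<le>p. of_nat (p choose k) * x ^ k * y ^ (p - k))"
    by (rule binomial_ring)
  also have "\<dots> = (\<Sum>k\<in>{0,p}. of_nat (p choose k) * x ^ k * y ^ (p - k))"
  proof (rule sum.mono_neutral_right)
    show "\<forall>k\<in>{..p} - {0, p}. of_nat (p choose k) * x ^ k * y ^ (p - k) = 0"
    proof
      fix k assume k: "k \<in> {..p} - {0, p}"
      then have "p dvd (p choose k)" using dvd_choose_prime[of k p] p by auto
      then obtain t where "p choose k = p * t" by blast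
      then have "(of_nat (p choose k) :: 'a) = 0" using z by simp
      then show "of_nat (p choose k) * x ^ k * y ^ (p - k) = 0" by simp
    qed
  qed auto
  also have "\<dots> = x ^ p + y ^ p" using p0 by simp
  finally show ?thesis .
qed

lemma frob:
  fixes x y :: "'a::comm_ring_1"
  assumes p: "prime p" and z: "of_nat p = (0::'a)"
  shows "(x + y) ^ (p ^ k) = x ^ (p ^ k) + y ^ (p ^ k)"
proof (induction k arbitrary: x y)
  case 0 then show ?case by simp
next
  case (Suc k)
  have "(x + y) ^ (p ^ Suc k) = ((x + y) ^ p) ^ (p ^ k)"
    by (simp add: power_mult mult.commute)
  also have "\<dots> = (x ^ p + y ^ p) ^ (p ^ k)" using frob_p[OF p z] by simp
  also have "\<dots> = (x ^ p) ^ (p ^ k) + (y ^ p) ^ (p ^ k)" by (rule Suc.IH[of "x^p" "y^p"])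
  also have "\<dots> = x ^ (p ^ Suc k) + y ^ (p ^ Suc k)"
    by (simp add: power_mult[symmetric] mult.commute)
  finally show ?case .
qed

lemma frob_sum:
  fixes f :: "'b \<Rightarrow> 'a::comm_ring_1"
  assumes p: "prime p" and z: "of_nat p = (0::'a)"
  shows "(sum f A) ^ (p ^ k) = (\<Sum>i\<in>A. f i ^ (p ^ k))"
proof (induction A rule: infinite_finite_induct)
  case (infinite A) then show ?case using prime_gt_0_nat[OF p] by (simp add: power_0_left)
next
  case empty then show ?case using prime_gt_0_nat[OF p] by (simp add: power_0_left)
next
  case (insert x F) then show ?case by (simp add: frob[OF p z])
qed

lemma frob_cancel:
  fixes x y :: "'a::idom"
  assumes p: "prime p" and z: "of_nat p = (0::'a)"
    and e: "x ^ (p ^ k) = y ^ (p ^ k)"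
  shows "x = y"
proof -
  have "((x - y) + y) ^ (p ^ k) = (x - y) ^ (p ^ k) + y ^ (p ^ k)" by (rule frob[OF p z])
  then have "(x - y) ^ (p ^ k) = 0" using e by simp
  then show ?thesis by simp
qed

section \<open>Group ring operator\<close>

definition Dop :: "(('n \<Rightarrow> int) \<Rightarrow>\<^sub>0 'r::comm_ring_1) \<Rightarrow> (('n \<Rightarrow> int) \<Rightarrow> 'r) \<Rightarrow> ('n \<Rightarrow> int) \<Rightarrow> 'r" where
  "Dop b f g = (\<Sum>u\<in>Poly_Mapping.keys b. Poly_Mapping.lookup b u * f (g - u))"

lemma Dop_superset:
  assumes "finite S" "Poly_Mapping.keys b \<subseteq> S"
  shows "Dop b f g = (\<Sum>u\<in>S. Poly_Mapping.lookup b u * f (g - u))"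
  unfolding Dop_def
  by (rule sum.mono_neutral_left) (use assms in \<open>auto simp: in_keys_iff\<close>)

lemma Dop_add: "Dop (b + c) f g = Dop b f g + Dop c f g"
proof -
  let ?S = "Poly_Mapping.keys b \<union> Poly_Mapping.keys c"
  have "Dop (b + c) f g = (\<Sum>u\<in>?S. Poly_Mapping.lookup (b + c) u * f (g - u))"
    by (rule Dop_superset) (use keys_add[of b c] in auto)
  also have "\<dots> = (\<Sum>u\<in>?S. Poly_Mapping.lookup b u * f (g - u)) + (\<Sum>u\<in>?S. Poly_Mapping.lookup c u * f (g - u))"
    by (simp add: lookup_add distrib_right sum.distrib)
  also have "\<dots> = Dop b f g + Dop c f g"
    by (simp add: Dop_superset[of "Poly_Mapping.keys b \<union> Poly_Mapping.keys c" b] Dop_superset[of "Poly_Mapping.keys b \<union> Poly_Mapping.keys c" c])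
  finally show ?thesis .
qed

lemma Dop_zero [simp]: "Dop 0 f g = 0"
  by (simp add: Dop_def)

lemma Dop_sum: "Dop (\<Sum>i\<in>I. b i) f g = (\<Sum>i\<in>I. Dop (b i) f g)"
  by (induction I rule: infinite_finite_induct) (auto simp: Dop_add)

lemma Dop_single: "Dop (Poly_Mapping.single u c) f g = c * f (g - u)"
proof -
  have "Dop (Poly_Mapping.single u c) f g = (\<Sum>w\<in>{u}. Poly_Mapping.lookup (Poly_Mapping.single u c) w * f (g - w))"
    by (rule Dop_superset) auto
  then show ?thesis by (simp add: lookup_single)
qed

lemma pm_expand: "b = (\<Sum>u\<in>Poly_Mapping.keys b. Poly_Mapping.single u (Poly_Mapping.lookup b u))"
  by (rule poly_mapping_eqI) (auto simp: lookup_sum lookup_single when_def in_keys_iff)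

lemma Dop_mult: "Dop (b * c) f g = Dop b (Dop c f) g"
proof -
  have "b * c = (\<Sum>u\<in>Poly_Mapping.keys b. Poly_Mapping.single u (Poly_Mapping.lookup b u)) * (\<Sum>w\<in>Poly_Mapping.keys c. Poly_Mapping.single w (Poly_Mapping.lookup c w))"
    using pm_expand[of b] pm_expand[of c] by simp
  also have "\<dots> = (\<Sum>u\<in>Poly_Mapping.keys b. \<Sum>w\<in>Poly_Mapping.keys c. Poly_Mapping.single (u + w) (Poly_Mapping.lookup b u * Poly_Mapping.lookup c w))"
    by (simp add: sum_product mult_single)
  finally have bc: "b * c = \<dots>" .
  have "Dop (b * c) f g = (\<Sum>u\<in>Poly_Mapping.keys b. \<Sum>w\<in>Poly_Mapping.keys c. Poly_Mapping.lookup b u * Poly_Mapping.lookup c w * f (g - (u + w)))"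
    unfolding bc by (simp add: Dop_sum Dop_single)
  also have "\<dots> = (\<Sum>u\<in>Poly_Mapping.keys b. Poly_Mapping.lookup b u * (\<Sum>w\<in>Poly_Mapping.keys c. Poly_Mapping.lookup c w * f (g - u - w)))"
    by (simp add: sum_distrib_left mult.assoc diff_diff_eq)
  also have "\<dots> = Dop b (Dop c f) g"
    by (simp add: Dop_def)
  finally show ?thesis .
qed

lemma Dop_one: "Dop 1 f g = f g"
  using Dop_single[of 0 1 f g] by simp

lemma Dop_linear_sum:
  "Dop b (\<lambda>x. \<Sum>k\<in>A. c k * h k x) g = (\<Sum>k\<in>A. c k * Dop b (h k) g)"
  unfolding Dop_def by (simp add: sum_distrib_left sum_distrib_right mult_ac sum.swap[of _ A])

lemma single_power: "(Poly_Mapping.single u (c::'r::comm_ring_1)) ^ k = Poly_Mapping.single (of_nat k * u) (c ^ k)"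
  by (induction k) (auto simp: mult_single algebra_simps)

lemma keys_frob:
  fixes b :: "('n \<Rightarrow> int) \<Rightarrow>\<^sub>0 'r::comm_ring_1"
  assumes p: "prime p" and z: "of_nat p = (0::'r)"
  shows "Poly_Mapping.keys (b ^ (p ^ k)) \<subseteq> (\<lambda>u. of_nat (p ^ k) * u) ` Poly_Mapping.keys b"
proof -
  have z': "of_nat p = (0 :: ('n \<Rightarrow> int) \<Rightarrow>\<^sub>0 'r)"
    using z by (metis single_of_nat single_zero)
  have "b ^ (p ^ k) = (\<Sum>u\<in>Poly_Mapping.keys b. Poly_Mapping.single u (Poly_Mapping.lookup b u)) ^ (p ^ k)"
    using pm_expand[of b] by simp
  also have "\<dots> = (\<Sum>u\<in>Poly_Mapping.keys b. Poly_Mapping.single u (Poly_Mapping.lookup b u) ^ (p ^ k))"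
    by (rule frob_sum[OF p z'])
  also have "\<dots> = (\<Sum>u\<in>Poly_Mapping.keys b. Poly_Mapping.single (of_nat (p ^ k) * u) (Poly_Mapping.lookup b u ^ (p ^ k)))"
    by (simp add: single_power)
  finally have e: "b ^ (p ^ k) = \<dots>" .
  show ?thesis
    unfolding e
    using keys_sum[of "\<lambda>u. Poly_Mapping.single (of_nat (p ^ k) * u) (Poly_Mapping.lookup b u ^ (p ^ k))" "Poly_Mapping.keys b"]
    by (auto split: if_splits)
qed

lemma conv_Dop:
  fixes a :: "('n::finite \<Rightarrow> int) \<Rightarrow> 'k::field"
  assumes "fin_supp a"
  shows "conv f a g = Dop (Abs_poly_mapping a) f g"
proof -
  have fin: "finite {x. a x \<noteq> 0}" using assms by (simp add: fin_supp_def)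
  have lk: "Poly_Mapping.lookup (Abs_poly_mapping a) = a" using fin by simp
  have ks: "Poly_Mapping.keys (Abs_poly_mapping a) = {x. a x \<noteq> 0}" by (auto simp: in_keys_iff lk)
  show ?thesis
    unfolding conv_def Dop_def ks lk
    by (rule sum.reindex_bij_witness[of _ "\<lambda>u. g - u" "\<lambda>h. g - h"]) (auto simp: mult.commute)
qed

section \<open>Sublattices\<close>

context
  fixes L :: "('n::finite \<Rightarrow> int) set"
  assumes L: "sublattice L"
begin

lemma sl_0: "0 \<in> L" using L by (simp add: sublattice_def)
lemma sl_add: "x \<in> L \<Longrightarrow> y \<in> L \<Longrightarrow> x + y \<in> L" using L by (simp add: sublattice_def)
lemma sl_neg: "x \<in> L \<Longrightarrow> - x \<in> L" using L by (simp add: sublattice_def)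
lemma sl_diff: "x \<in> L \<Longrightarrow> y \<in> L \<Longrightarrow> x - y \<in> L"
  using sl_add[of x "- y"] sl_neg[of y] by simp
lemma sl_nat: "x \<in> L \<Longrightarrow> of_nat n * x \<in> L"
  by (induction n) (auto simp: sl_0 distrib_right intro: sl_add)
lemma sl_int: "x \<in> L \<Longrightarrow> of_int z * x \<in> L"
proof (cases "z \<ge> 0")
  case True
  then have "of_int z = (of_nat (nat z) :: 'n \<Rightarrow> int)" by (metis of_int_of_nat_eq int_nat_eq)
  then show "x \<in> L \<Longrightarrow> ?thesis" using sl_nat by simp
next
  case False
  then have "of_int z = - (of_nat (nat (- z)) :: 'n \<Rightarrow> int)"
    by (metis add.inverse_inverse int_nat_eq not_le of_int_minus of_int_of_nat_eq order.strict_implies_order neg_0_le_iff_le)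
  then show "x \<in> L \<Longrightarrow> ?thesis" using sl_nat sl_neg by simp
qed
lemma sl_diff_sym: "x - y \<in> L \<Longrightarrow> y - x \<in> L"
  using sl_neg[of "x - y"] by simp
lemma sl_trans: "x - y \<in> L \<Longrightarrow> y - z \<in> L \<Longrightarrow> x - z \<in> L"
  using sl_add[of "x - y" "y - z"] by simp

lemma cos_eq: "((\<lambda>w. x + w) ` L = (\<lambda>w. y + w) ` L) \<longleftrightarrow> x - y \<in> L"
proof
  assume e: "(\<lambda>w. x + w) ` L = (\<lambda>w. y + w) ` L"
  have "x \<in> (\<lambda>w. x + w) ` L" using sl_0 by force
  then obtain w where "w \<in> L" "x = y + w" using e by auto
  then show "x - y \<in> L" by simp
next
  assume d: "x - y \<in> L"
  show "(\<lambda>w. x + w) ` L = (\<lambda>w. y + w) ` L"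
  proof (rule Set.set_eqI, rule iffI)
    fix z assume "z \<in> (\<lambda>w. x + w) ` L"
    then obtain w where w: "w \<in> L" "z = x + w" by auto
    then have "z = y + ((x - y) + w)" by simp
    then show "z \<in> (\<lambda>w. y + w) ` L" using sl_add[OF d w(1)] by blast
  next
    fix z assume "z \<in> (\<lambda>w. y + w) ` L"
    then obtain w where w: "w \<in> L" "z = y + w" by auto
    then have "z = x + ((y - x) + w)" by simp
    then show "z \<in> (\<lambda>w. x + w) ` L" using sl_add[OF sl_diff_sym[OF d] w(1)] by blast
  qed
qed

end

definition idx :: "('n::finite \<Rightarrow> int) set \<Rightarrow> ('n \<Rightarrow> int) set \<Rightarrow> nat" where
  "idx B A = card ((\<lambda>v. (\<lambda>w. v + w) ` A) ` B)"

lemma lat_index_idx: "lat_index L = idx UNIV L"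
  by (simp add: lat_index_def idx_def)

definition sysrep :: "('n::finite \<Rightarrow> int) set \<Rightarrow> ('n \<Rightarrow> int) set \<Rightarrow> ('n \<Rightarrow> int) list \<Rightarrow> bool" where
  "sysrep B A rs \<longleftrightarrow> set rs \<subseteq> B \<and> (\<forall>i<length rs. \<forall>j<length rs. rs ! i - rs ! j \<in> A \<longrightarrow> i = j)
     \<and> (\<forall>b\<in>B. \<exists>i<length rs. b - rs ! i \<in> A)"

lemma sysrep_idx:
  assumes A: "sublattice A" and S: "sysrep B A rs"
  shows "idx B A = length rs"
proof -
  have im: "(\<lambda>v. (\<lambda>w. v + w) ` A) ` B = (\<lambda>i. (\<lambda>w. rs ! i + w) ` A) ` {..<length rs}"
  proof (rule Set.set_eqI, rule iffI)
    fix C assume "C \<in> (\<lambda>v. (\<lambda>w. v + w) ` A) ` B"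
    then obtain b where b: "b \<in> B" "C = (\<lambda>w. b + w) ` A" by auto
    then obtain i where "i < length rs" "b - rs ! i \<in> A" using S by (auto simp: sysrep_def)
    then show "C \<in> (\<lambda>i. (\<lambda>w. rs ! i + w) ` A) ` {..<length rs}"
      using b cos_eq[OF A] by auto
  next
    fix C assume "C \<in> (\<lambda>i. (\<lambda>w. rs ! i + w) ` A) ` {..<length rs}"
    then obtain i where "i < length rs" "C = (\<lambda>w. rs ! i + w) ` A" by auto
    moreover have "rs ! i \<in> B" using S \<open>i < length rs\<close> by (auto simp: sysrep_def)
    ultimately show "C \<in> (\<lambda>v. (\<lambda>w. v + w) ` A) ` B" by auto
  qed
  have inj: "inj_on (\<lambda>i. (\<lambda>w. rs ! i + w) ` A) {..<length rs}"
    using S cos_eq[OF A] by (simp add: inj_on_def sysrep_def)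
  show ?thesis unfolding idx_def im card_image[OF inj] by simp
qed

lemma idx_sysrep:
  assumes A: "sublattice A" and n: "idx B A = n" "n > 0"
  shows "\<exists>rs. sysrep B A rs \<and> length rs = n"
proof -
  let ?C = "(\<lambda>v. (\<lambda>w. v + w) ` A) ` B"
  have fin: "finite ?C"
  proof (rule ccontr)
    assume "infinite ?C"
    then have "idx B A = 0" by (simp add: idx_def)
    with n show False by simp
  qed
  obtain cs where cs: "set cs = ?C" "distinct cs" using finite_distinct_list[OF fin] by blast
  define rs where "rs = map (\<lambda>c. SOME b. b \<in> B \<and> c = (\<lambda>w. b + w) ` A) cs"
  have lrc: "length rs = length cs" by (simp add: rs_def)
  have rsi: "rs ! i \<in> B \<and> cs ! i = (\<lambda>w. rs ! i + w) ` A" if "i < length cs" for i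
  proof -
    have "cs ! i \<in> ?C" using that cs(1) nth_mem by blast
    then have "\<exists>b. b \<in> B \<and> cs ! i = (\<lambda>w. b + w) ` A" by auto
    from someI_ex[OF this] show ?thesis unfolding rs_def using that by simp
  qed
  have "length cs = n" using distinct_card[OF cs(2)] cs(1) n(1) by (simp add: idx_def)
  then have len: "length rs = n" by (simp add: lrc)
  have "sysrep B A rs"
    unfolding sysrep_def
  proof (intro conjI allI impI ballI)
    show "set rs \<subseteq> B"
    proof
      fix x assume "x \<in> set rs"
      then obtain i where "i < length rs" "x = rs ! i" by (auto simp: in_set_conv_nth)
      then show "x \<in> B" using rsi[of i] lrc by simp
    qed
  next
    fix i j assume ij: "i < length rs" "j < length rs" "rs ! i - rs ! j \<in> A"
    have "cs ! i = cs ! j"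
      using rsi[of i] rsi[of j] ij lrc cos_eq[OF A, of "rs ! i" "rs ! j"] by simp
    then show "i = j" using cs(2) ij lrc by (simp add: nth_eq_iff_index_eq)
  next
    fix b assume "b \<in> B"
    then have "(\<lambda>w. b + w) ` A \<in> set cs" using cs by auto
    then obtain i where i: "i < length cs" "cs ! i = (\<lambda>w. b + w) ` A" by (auto simp: in_set_conv_nth)
    then have "b - rs ! i \<in> A" using rsi[OF i(1)] cos_eq[OF A, of b "rs ! i"] by simp
    then show "\<exists>i<length rs. b - rs ! i \<in> A" using i lrc by auto
  qed
  then show ?thesis using len by blast
qed

lemma sysrep_len_pos: "sysrep B A rs \<Longrightarrow> B \<noteq> {} \<Longrightarrow> length rs > 0"
  by (auto simp: sysrep_def)

lemma sysrep_nth: "sysrep B A rs \<Longrightarrow> i < length rs \<Longrightarrow> rs ! i \<in> B"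
  by (auto simp: sysrep_def)

lemma tower_rep:
  assumes A: "sublattice A" and B: "sublattice B" and AB: "A \<subseteq> B"
    and C: "\<And>x y. x \<in> C \<Longrightarrow> y \<in> B \<Longrightarrow> x + y \<in> C"
    and s: "sysrep C B s" and t: "sysrep B A t" and k: "length t = k" "k > 0"
  shows "sysrep C A (map (\<lambda>x. s ! (x div k) + t ! (x mod k)) [0..<length s * k])"
proof -
  let ?m = "length s"
  let ?st = "map (\<lambda>x. s ! (x div k) + t ! (x mod k)) [0..<?m * k]"
  have dm: "x div k < ?m" "x mod k < k" if "x < ?m * k" for x
    using that k by (auto simp: less_mult_imp_div_less)
  show ?thesis
    unfolding sysrep_def
  proof (intro conjI allI impI ballI)
    show "set ?st \<subseteq> C"
    proof
      fix z assume "z \<in> set ?st"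
      then obtain x where x: "x < ?m * k" "z = s ! (x div k) + t ! (x mod k)" by auto
      show "z \<in> C" using C[OF sysrep_nth[OF s dm(1)[OF x(1)]] sysrep_nth[OF t]] dm[OF x(1)] k x(2) by simp
    qed
  next
    fix x y assume xy: "x < length ?st" "y < length ?st" "?st ! x - ?st ! y \<in> A"
    then have x: "x < ?m * k" and y: "y < ?m * k" by auto
    have tj: "t ! (x mod k) \<in> B" "t ! (y mod k) \<in> B" using sysrep_nth[OF t] dm x y k by auto
    have e: "(s ! (x div k) + t ! (x mod k)) - (s ! (y div k) + t ! (y mod k)) \<in> A"
      using xy x y by simp
    have "s ! (x div k) - s ! (y div k) = ((s ! (x div k) + t ! (x mod k)) - (s ! (y div k) + t ! (y mod k))) - (t ! (x mod k) - t ! (y mod k))"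
      by simp
    also have "\<dots> \<in> B" using e AB tj sl_diff[OF B] by blast
    finally have "x div k = y div k" using s dm x y by (auto simp: sysrep_def)
    then have "t ! (x mod k) - t ! (y mod k) \<in> A" using e by (simp add: algebra_simps)
    then have "x mod k = y mod k" using t dm x y k by (auto simp: sysrep_def)
    with \<open>x div k = y div k\<close> show "x = y" by (metis div_mult_mod_eq)
  next
    fix c assume c: "c \<in> C"
    obtain i where i: "i < ?m" "c - s ! i \<in> B" using s c by (auto simp: sysrep_def)
    obtain j where j: "j < k" "c - s ! i - t ! j \<in> A" using t i k by (auto simp: sysrep_def)
    have xl: "i * k + j < ?m * k"
    proof -
      have "i * k + j < i * k + k" using j by simp
      also have "\<dots> = (i + 1) * k" by simp
      also have "\<dots> \<le> ?m * k" using i by (intro mult_right_mono) auto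
      finally show ?thesis .
    qed
    have "(i * k + j) div k = i" "(i * k + j) mod k = j" using j k by auto
    then have "c - ?st ! (i * k + j) \<in> A" using j xl by (simp add: algebra_simps)
    then show "\<exists>x<length ?st. c - ?st ! x \<in> A" using xl by (intro exI[of _ "i * k + j"]) auto
  qed
qed

lemma cos_cover:
  assumes A': "sublattice A'" and AA: "A \<subseteq> A'" and rs: "sysrep B A rs" and BB: "B' \<subseteq> B"
  shows "(\<lambda>v. (\<lambda>w. v + w) ` A') ` B' \<subseteq> (\<lambda>i. (\<lambda>w. rs ! i + w) ` A') ` {..<length rs}"
proof
  fix X assume "X \<in> (\<lambda>v. (\<lambda>w. v + w) ` A') ` B'"
  then obtain b where b: "b \<in> B'" "X = (\<lambda>w. b + w) ` A'" by auto
  have "b \<in> B" using b BB by auto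
  then obtain i where "i < length rs" "b - rs ! i \<in> A" using rs unfolding sysrep_def by blast
  then show "X \<in> (\<lambda>i. (\<lambda>w. rs ! i + w) ` A') ` {..<length rs}"
    using b cos_eq[OF A'] AA by blast
qed

lemma exists_rep:
  assumes A': "sublattice A'" and AA: "A \<subseteq> A'" and rs: "sysrep B A rs" and BB: "B' \<subseteq> B"
    and ne: "b \<in> B'"
  shows "\<exists>rs'. sysrep B' A' rs'"
proof -
  let ?C = "(\<lambda>v. (\<lambda>w. v + w) ` A') ` B'"
  have fin: "finite ?C" using cos_cover[OF assms(1-4)] finite_subset by blast
  have "?C \<noteq> {}" using ne by auto
  then have "idx B' A' > 0" using fin by (simp add: idx_def card_gt_0_iff)
  then show ?thesis using idx_sysrep[OF A'] by blast
qed

definition cspan :: "('n::finite \<Rightarrow> int) set \<Rightarrow> ('n \<Rightarrow> int) \<Rightarrow> ('n \<Rightarrow> int) set" where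
  "cspan A b = {a + of_int z * b | a z. a \<in> A}"

lemma cspan_sl:
  assumes A: "sublattice A" shows "sublattice (cspan A b)"
  unfolding sublattice_def cspan_def
proof (intro conjI ballI)
  show "0 \<in> {a + of_int z * b |a z. a \<in> A}"
    using sl_0[OF A] by (intro CollectI exI[of _ 0]) auto
next
  fix x y assume "x \<in> {a + of_int z * b |a z. a \<in> A}" "y \<in> {a + of_int z * b |a z. a \<in> A}"
  then obtain a1 z1 a2 z2 where "a1 \<in> A" "a2 \<in> A" "x = a1 + of_int z1 * b" "y = a2 + of_int z2 * b" by auto
  then show "x + y \<in> {a + of_int z * b |a z. a \<in> A}"
    using sl_add[OF A] by (intro CollectI exI[of _ "a1 + a2"] exI[of _ "z1 + z2"]) (auto simp: algebra_simps)
next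
  fix x assume "x \<in> {a + of_int z * b |a z. a \<in> A}"
  then obtain a1 z1 where "a1 \<in> A" "x = a1 + of_int z1 * b" by auto
  then show "- x \<in> {a + of_int z * b |a z. a \<in> A}"
    using sl_neg[OF A] by (intro CollectI exI[of _ "- a1"] exI[of _ "- z1"]) (auto simp: algebra_simps)
qed

lemma cspan_sup: "A \<subseteq> cspan A b"
proof
  fix x assume "x \<in> A"
  then show "x \<in> cspan A b" unfolding cspan_def by (intro CollectI exI[of _ x] exI[of _ "0::int"]) simp
qed

lemma cspan_sub: "sublattice B \<Longrightarrow> A \<subseteq> B \<Longrightarrow> b \<in> B \<Longrightarrow> cspan A b \<subseteq> B"
  unfolding cspan_def using sl_add sl_int by blast

lemma cyclic:
  assumes A: "sublattice A" and e: "e > 0" "of_nat e * b \<in> A"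
  defines "d \<equiv> LEAST d. 0 < d \<and> of_nat d * b \<in> A"
  shows "d > 0" "of_nat d * b \<in> A" "d dvd e" "b \<notin> A \<Longrightarrow> d > 1"
    "sysrep (cspan A b) A (map (\<lambda>i. of_nat i * b) [0..<d])"
proof -
  have dd: "0 < d \<and> of_nat d * b \<in> A" unfolding d_def by (rule LeastI[of _ e]) (use e in auto)
  then show "d > 0" "of_nat d * b \<in> A" by auto
  have mn: "\<not> (0 < r \<and> of_nat r * b \<in> A)" if "r < d" for r
    using not_less_Least[of r "\<lambda>d. 0 < d \<and> of_nat d * b \<in> A"] that unfolding d_def by blast
  have modin: "of_nat (x mod d) * b \<in> A" if "of_nat x * b \<in> A" for x
  proof -
    have "of_nat (x mod d) * b = of_nat x * b - of_nat (x div d) * (of_nat d * b)"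
    proof -
      have "x = x div d * d + x mod d" by simp
      then have "(of_nat x :: 'a \<Rightarrow> int) = of_nat (x div d) * of_nat d + of_nat (x mod d)"
        by (metis of_nat_add of_nat_mult)
      then show ?thesis by (simp add: algebra_simps)
    qed
    then show ?thesis using that dd sl_diff[OF A] sl_nat[OF A] by simp
  qed
  show "d dvd e"
  proof -
    have "e mod d < d" using dd by simp
    then have "e mod d = 0" using mn modin[OF e(2)] by auto
    then show ?thesis by (simp add: mod_eq_0_iff_dvd)
  qed
  show "b \<notin> A \<Longrightarrow> d > 1"
  proof -
    assume "b \<notin> A"
    then have "d \<noteq> 1" using dd by auto
    then show "d > 1" using dd by simp
  qed
  show "sysrep (cspan A b) A (map (\<lambda>i. of_nat i * b) [0..<d])"
    unfolding sysrep_def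
  proof (intro conjI allI impI ballI)
    show "set (map (\<lambda>i. of_nat i * b) [0..<d]) \<subseteq> cspan A b"
      unfolding cspan_def using sl_0[OF A] by (auto intro!: exI[of _ 0] exI[of _ "int _"])
  next
    fix i j assume ij: "i < length (map (\<lambda>i. of_nat i * b) [0..<d])" "j < length (map (\<lambda>i. of_nat i * b) [0..<d])"
      "map (\<lambda>i. of_nat i * b) [0..<d] ! i - map (\<lambda>i. of_nat i * b) [0..<d] ! j \<in> A"
    then have ij': "i < d" "j < d" "of_nat i * b - of_nat j * b \<in> A" by auto
    show "i = j"
    proof (rule ccontr)
      assume "i \<noteq> j"
      then consider "j < i" | "i < j" by linarith
      then show False
      proof cases
        case 1
        have "of_nat (i - j) * b = of_nat i * b - of_nat j * b" using 1 by (simp add: of_nat_diff algebra_simps)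
        then have "of_nat (i - j) * b \<in> A" using ij' by simp
        moreover have "i - j < d" "0 < i - j" using ij' 1 by auto
        ultimately show False using mn by blast
      next
        case 2
        have "of_nat (j - i) * b = - (of_nat i * b - of_nat j * b)" using 2 by (simp add: of_nat_diff algebra_simps)
        then have "of_nat (j - i) * b \<in> A" using ij' sl_neg[OF A, of "of_nat i * b - of_nat j * b"] by simp
        moreover have "j - i < d" "0 < j - i" using ij' 2 by auto
        ultimately show False using mn by blast
      qed
    qed
  next
    fix x assume "x \<in> cspan A b"
    then obtain a z where az: "a \<in> A" "x = a + of_int z * b" by (auto simp: cspan_def)
    define r where "r = nat (z mod int d)"
    have r: "r < d" "int r = z mod int d" using dd by (auto simp: r_def nat_less_iff)
    have "(of_int z :: 'a \<Rightarrow> int) = of_int (z div int d) * of_nat d + of_nat r"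
    proof -
      have "z = z div int d * int d + int r" using r by simp
      then show ?thesis by (metis of_int_add of_int_mult of_int_of_nat_eq)
    qed
    then have "x - of_nat r * b = a + of_int (z div int d) * (of_nat d * b)"
      using az by (simp add: algebra_simps)
    also have "\<dots> \<in> A" using az dd sl_add[OF A] sl_int[OF A] by simp
    finally show "\<exists>i<length (map (\<lambda>i. of_nat i * b) [0..<d]). x - map (\<lambda>i. of_nat i * b) [0..<d] ! i \<in> A"
      using r by (intro exI[of _ r]) auto
  qed
qed

lemma sl_UNIV: "sublattice (UNIV :: ('n::finite \<Rightarrow> int) set)"
  by (simp add: sublattice_def)

lemma sl_pre: assumes L: "sublattice L" shows "sublattice {v. of_nat k * v \<in> L}"
  unfolding sublattice_def using sl_0[OF L] sl_add[OF L] sl_neg[OF L]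
  by (auto simp: distrib_left)

lemma lagrange:
  assumes A: "sublattice A" and B: "sublattice B" and AB: "A \<subseteq> B" and rs: "sysrep B A rs"
    and v: "v \<in> B"
  shows "of_nat (length rs) * v \<in> A"
proof -
  let ?n = "length rs"
  have n0: "?n > 0" using sysrep_len_pos[OF rs] v by auto
  define f where "f k = (SOME i. i < ?n \<and> of_nat k * v - rs ! i \<in> A)" for k :: nat
  have fk: "f k < ?n \<and> of_nat k * v - rs ! (f k) \<in> A" for k
  proof -
    have "of_nat k * v \<in> B" using sl_nat[OF B v] .
    then have "\<exists>i. i < ?n \<and> of_nat k * v - rs ! i \<in> A" using rs unfolding sysrep_def by blast
    from someI_ex[OF this] show ?thesis unfolding f_def .
  qed
  have "\<not> inj_on f {0..?n}"
  proof
    assume inj: "inj_on f {0..?n}"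
    have "f ` {0..?n} \<subseteq> {..<?n}" using fk by auto
    then have "card {0..?n} \<le> card {..<?n}" using card_inj_on_le[OF inj] by blast
    then show False by simp
  qed
  then obtain k1 k2 where k: "k1 \<noteq> k2" "f k1 = f k2" unfolding inj_on_def by blast
  have dk: "of_nat k1 * v - of_nat k2 * v \<in> A"
  proof -
    have "(of_nat k1 * v - rs ! (f k1)) - (of_nat k2 * v - rs ! (f k2)) \<in> A"
      using fk[of k1] fk[of k2] sl_diff[OF A] by blast
    moreover have "(of_nat k1 * v - rs ! (f k1)) - (of_nat k2 * v - rs ! (f k2)) = of_nat k1 * v - of_nat k2 * v"
      using k by simp
    ultimately show ?thesis by simp
  qed
  obtain e where e: "e > 0" "of_nat e * v \<in> A"
  proof (cases "k2 < k1")
    case True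
    have "of_nat (k1 - k2) * v = of_nat k1 * v - of_nat k2 * v" using True by (simp add: of_nat_diff algebra_simps)
    then show ?thesis using that[of "k1 - k2"] True dk by simp
  next
    case False
    then have lt: "k1 < k2" using k by simp
    have "of_nat (k2 - k1) * v = - (of_nat k1 * v - of_nat k2 * v)" using lt by (simp add: of_nat_diff algebra_simps)
    then show ?thesis using that[of "k2 - k1"] lt sl_neg[OF A dk] by simp
  qed
  define d where "d = (LEAST d. 0 < d \<and> of_nat d * v \<in> A)"
  note cyc = cyclic[OF A e, folded d_def]
  have sub: "cspan A v \<subseteq> B" by (rule cspan_sub[OF B AB v])
  obtain rs' where rs': "sysrep B (cspan A v) rs'"
    using exists_rep[OF cspan_sl[OF A] cspan_sup rs order_refl v] by blast
  have tw: "sysrep B A (map (\<lambda>x. rs' ! (x div d) + (map (\<lambda>i. of_nat i * v) [0..<d]) ! (x mod d)) [0..<length rs' * d])"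
    by (rule tower_rep[OF A cspan_sl[OF A] cspan_sup _ rs' cyc(5)]) (use sl_add[OF B] sub cyc(1) in auto)
  have "?n = length rs' * d" using sysrep_idx[OF A rs] sysrep_idx[OF A tw] by simp
  then have "(of_nat ?n :: 'a \<Rightarrow> int) * v = of_nat (length rs') * (of_nat d * v)" by (simp add: mult.assoc)
  then show ?thesis using sl_nat[OF A cyc(2)] by simp
qed

lemma exp_lemma:
  assumes "sublattice A" "sublattice B" "A \<subseteq> B" "sysrep B A rs" "e > 0" "\<forall>b\<in>B. of_nat e * b \<in> A"
  shows "\<exists>k. length rs dvd e ^ k"
  using assms
proof (induction "length rs" arbitrary: A rs rule: less_induct)
  case less
  note A = less.prems(1) and B = less.prems(2) and AB = less.prems(3) and rs = less.prems(4)
  have n0: "length rs > 0" using sysrep_len_pos[OF rs] sl_0[OF B] by auto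
  show ?case
  proof (cases "length rs = 1")
    case True then show ?thesis by (intro exI[of _ 0]) simp
  next
    case False
    then have n2: "length rs > 1" using n0 by linarith
    define b where "b = rs ! 1 - rs ! 0"
    have bB: "b \<in> B" unfolding b_def
      by (rule sl_diff[OF B]; rule sysrep_nth[OF rs]) (use n2 in auto)
    have bA: "b \<notin> A" using rs n2 unfolding sysrep_def b_def by force
    have eb: "of_nat e * b \<in> A" using less.prems(6) bB by blast
    define d where "d = (LEAST d. 0 < d \<and> of_nat d * b \<in> A)"
    note cyc = cyclic[OF A less.prems(5) eb, folded d_def]
    have sub: "cspan A b \<subseteq> B" by (rule cspan_sub[OF B AB bB])
    obtain rs' where rs': "sysrep B (cspan A b) rs'"
      using exists_rep[OF cspan_sl[OF A] cspan_sup rs order_refl bB] by blast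
    have tw: "sysrep B A (map (\<lambda>x. rs' ! (x div d) + (map (\<lambda>i. of_nat i * b) [0..<d]) ! (x mod d)) [0..<length rs' * d])"
      by (rule tower_rep[OF A cspan_sl[OF A] cspan_sup _ rs' cyc(5)]) (use sl_add[OF B] sub cyc(1) in auto)
    have nn: "length rs = length rs' * d" using sysrep_idx[OF A rs] sysrep_idx[OF A tw] by simp
    have lt: "length rs' < length rs" using nn cyc(4)[OF bA] n0 by simp
    have "\<exists>k. length rs' dvd e ^ k"
      by (rule less.hyps[OF lt cspan_sl[OF A] B sub rs' less.prems(5)])
         (use less.prems(6) cspan_sup in blast)
    then obtain k where "length rs' dvd e ^ k" by blast
    then have "length rs' * d dvd e ^ k * e" using cyc(3) by (rule mult_dvd_mono)
    then show ?thesis using nn by (intro exI[of _ "Suc k"]) (simp add: mult.commute)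
  qed
qed

lemma part1:
  fixes L' :: "('n::finite \<Rightarrow> int) set"
  assumes L: "sublattice L'" and idx: "lat_index L' = m * q" and p: "prime p"
    and m: "m = p ^ \<alpha>" and pq: "\<not> p dvd q"
  defines "L2 \<equiv> {v. of_nat m * v \<in> L'}" and "LQ \<equiv> {v. of_nat q * v \<in> L'}"
  shows "sublattice L2" "L' \<subseteq> L2" "sublattice LQ" "L' \<subseteq> LQ"
    "\<And>v. v \<in> L2 \<Longrightarrow> v \<in> LQ \<Longrightarrow> v \<in> L'"
    "\<And>v. of_nat m * v \<in> LQ"
    "\<exists>s t. sysrep UNIV LQ s \<and> length s = m \<and> sysrep LQ L' t \<and> sysrep UNIV L2 t \<and> length t = q"
    "lat_index L2 = q"
    "\<And>L3. sublattice L3 \<Longrightarrow> lat_index L3 = q \<Longrightarrow> L' \<subseteq> L3 \<Longrightarrow> L3 = L2"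
proof -
  have q0: "q > 0" using pq by (metis dvd_0_right gr0I)
  have m0: "m > 0" using p m by (simp add: prime_gt_0_nat)
  obtain rs where rs: "sysrep UNIV L' rs" "length rs = m * q"
    using idx_sysrep[OF L, of UNIV "m * q"] idx q0 m0 by (auto simp: lat_index_idx)
  have lag: "of_nat (m * q) * v \<in> L'" for v
    using lagrange[OF L sl_UNIV _ rs(1)] rs(2) by auto
  show sL2: "sublattice L2" unfolding L2_def by (rule sl_pre[OF L])
  show sLQ: "sublattice LQ" unfolding LQ_def by (rule sl_pre[OF L])
  show L2s: "L' \<subseteq> L2" unfolding L2_def using sl_nat[OF L] by auto
  show LQs: "L' \<subseteq> LQ" unfolding LQ_def using sl_nat[OF L] by auto
  have cop: "coprime m q" using p pq m by (simp add: prime_imp_coprime coprime_power_left_iff)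
  then have "gcd (int m) (int q) = 1" by (simp add: gcd_int_int_eq)
  then obtain u w :: int where uw: "u * int m + w * int q = 1" using bezout_int[of "int m" "int q"] by auto
  have one: "(of_int u * of_nat m + of_int w * of_nat q :: 'n \<Rightarrow> int) = 1"
  proof -
    have "(of_int (u * int m + w * int q) :: 'n \<Rightarrow> int) = 1" using uw by simp
    then show ?thesis by simp
  qed
  have dec: "v = of_int u * (of_nat m * v) + of_int w * (of_nat q * v)" for v :: "'n \<Rightarrow> int"
  proof -
    have "v = (of_int u * of_nat m + of_int w * of_nat q) * v" using one by simp
    then show ?thesis by (simp add: algebra_simps)
  qed
  show cap: "v \<in> L'" if "v \<in> L2" "v \<in> LQ" for v
  proof -
    have "of_int u * (of_nat m * v) + of_int w * (of_nat q * v) \<in> L'"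
      using that sl_add[OF L] sl_int[OF L] by (simp add: L2_def LQ_def)
    then show ?thesis using dec[of v] by simp
  qed
  show mQ: "of_nat m * v \<in> LQ" for v
  proof -
    have "(of_nat q :: 'n \<Rightarrow> int) * (of_nat m * v) = of_nat (m * q) * v" by (simp add: mult_ac)
    then show ?thesis unfolding LQ_def mem_Collect_eq using lag[of v] by metis
  qed
  have q2: "of_nat q * v \<in> L2" for v
  proof -
    have "(of_nat m :: 'n \<Rightarrow> int) * (of_nat q * v) = of_nat (m * q) * v" by (simp add: mult_ac)
    then show ?thesis unfolding L2_def mem_Collect_eq using lag[of v] by metis
  qed
  obtain s where s: "sysrep UNIV LQ s"
    using exists_rep[OF sLQ LQs rs(1), of UNIV 0] by auto
  obtain t where t: "sysrep LQ L' t"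
    using exists_rep[OF L order_refl rs(1), of LQ 0] sl_0[OF sLQ] by auto
  have t0: "length t > 0" using sysrep_len_pos[OF t] sl_0[OF sLQ] by auto
  have tw: "sysrep UNIV L' (map (\<lambda>x. s ! (x div length t) + t ! (x mod length t)) [0..<length s * length t])"
    by (rule tower_rep[OF L sLQ LQs _ s t refl t0]) auto
  have N: "m * q = length s * length t" using sysrep_idx[OF L tw] sysrep_idx[OF L rs(1)] rs(2) by simp
  obtain k1 where k1: "length s dvd m ^ k1"
    using exp_lemma[OF sLQ sl_UNIV _ s m0] mQ by auto
  obtain k2 where k2: "length t dvd q ^ k2"
    using exp_lemma[OF L sLQ LQs t q0] by (auto simp: LQ_def)
  have c1: "coprime (length s) q"
    by (rule coprime_divisors[OF k1 dvd_refl]) (use cop in \<open>simp add: coprime_power_left_iff\<close>)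
  have c2: "coprime (length t) m"
    by (rule coprime_divisors[OF k2 dvd_refl]) (use cop in \<open>simp add: coprime_power_left_iff coprime_commute\<close>)
  have d1: "length s dvd m"
  proof -
    have "length s dvd m * q" using N by simp
    then show ?thesis using c1 by (simp add: coprime_dvd_mult_left_iff)
  qed
  have d2: "length t dvd q"
  proof -
    have "length t dvd q * m" using N by (simp add: mult.commute)
    then show ?thesis using c2 by (simp add: coprime_dvd_mult_left_iff)
  qed
  have le1: "length s \<le> m" using d1 m0 by (simp add: dvd_imp_le)
  have le2: "length t \<le> q" using d2 q0 by (simp add: dvd_imp_le)
  have ls: "length s = m"
  proof (rule ccontr)
    assume "length s \<noteq> m"
    then have "length s < m" using le1 by simp
    have "length s * length t \<le> length s * q" using le2 by (rule mult_le_mono2)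
    also have "\<dots> < m * q" using \<open>length s < m\<close> q0 by (rule mult_less_mono1)
    finally have "length s * length t < m * q" .
    then show False using N by simp
  qed
  have lt: "length t = q" using N ls m0 by simp
  have t2: "sysrep UNIV L2 t"
    unfolding sysrep_def
  proof (intro conjI allI impI ballI)
    show "set t \<subseteq> UNIV" by simp
  next
    fix i j assume ij: "i < length t" "j < length t" "t ! i - t ! j \<in> L2"
    have "t ! i - t ! j \<in> LQ" using sl_diff[OF sLQ] sysrep_nth[OF t] ij by simp
    then have "t ! i - t ! j \<in> L'" using cap ij by simp
    then show "i = j" using t ij unfolding sysrep_def by blast
  next
    fix v :: "'n \<Rightarrow> int"
    define x where "x = of_int w * (of_nat q * v)"
    define y where "y = of_int u * (of_nat m * v)"
    have x: "x \<in> L2" unfolding x_def using sl_int[OF sL2 q2] .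
    have y: "y \<in> LQ" unfolding y_def using sl_int[OF sLQ mQ] .
    obtain j where j: "j < length t" "y - t ! j \<in> L'" using t y unfolding sysrep_def by blast
    have "v - t ! j = x + (y - t ! j)" using dec[of v] by (simp add: x_def y_def algebra_simps)
    also have "\<dots> \<in> L2" using sl_add[OF sL2 x] j L2s by auto
    finally show "\<exists>i<length t. v - t ! i \<in> L2" using j by blast
  qed
  show "\<exists>s t. sysrep UNIV LQ s \<and> length s = m \<and> sysrep LQ L' t \<and> sysrep UNIV L2 t \<and> length t = q"
    using s ls t t2 lt by blast
  show "lat_index L2 = q" using sysrep_idx[OF sL2 t2] lt by (simp add: lat_index_idx)
  show "L3 = L2" if L3: "sublattice L3" "lat_index L3 = q" "L' \<subseteq> L3" for L3
  proof -
    obtain r3 where r3: "sysrep UNIV L3 r3" "length r3 = q"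
      using idx_sysrep[OF L3(1), of UNIV q] L3(2) q0 by (auto simp: lat_index_idx)
    have lag3: "of_nat q * v \<in> L3" for v
      using lagrange[OF L3(1) sl_UNIV _ r3(1)] r3(2) by auto
    have A: "L2 \<subseteq> L3"
    proof
      fix v assume "v \<in> L2"
      then have "of_nat m * v \<in> L3" using L3(3) by (auto simp: L2_def)
      then have "of_int u * (of_nat m * v) + of_int w * (of_nat q * v) \<in> L3"
        using sl_add[OF L3(1)] sl_int[OF L3(1)] lag3 by simp
      then show "v \<in> L3" using dec[of v] by simp
    qed
    obtain t3 where t3: "sysrep L3 L' t3"
      using exists_rep[OF L order_refl rs(1), of L3 0] sl_0[OF L3(1)] by auto
    have t30: "length t3 > 0" using sysrep_len_pos[OF t3] sl_0[OF L3(1)] by auto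
    have tw3: "sysrep UNIV L' (map (\<lambda>x. r3 ! (x div length t3) + t3 ! (x mod length t3)) [0..<length r3 * length t3])"
      by (rule tower_rep[OF L L3(1) L3(3) _ r3(1) t3 refl t30]) auto
    have "m * q = q * length t3" using sysrep_idx[OF L tw3] sysrep_idx[OF L rs(1)] rs(2) r3(2) by simp
    then have lt3: "length t3 = m" using q0 by simp
    have B: "L3 \<subseteq> L2"
    proof
      fix v assume "v \<in> L3"
      then have "of_nat (length t3) * v \<in> L'" using lagrange[OF L L3(1) L3(3) t3] by blast
      then show "v \<in> L2" using lt3 by (simp add: L2_def)
    qed
    show ?thesis using A B by blast
  qed
qed

definition per :: "('n::finite \<Rightarrow> int) set \<Rightarrow> (('n \<Rightarrow> int) \<Rightarrow> 'r) \<Rightarrow> bool" where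
  "per L f \<longleftrightarrow> (\<forall>v. \<forall>w\<in>L. f (v + w) = f v)"

definition ind :: "('n::finite \<Rightarrow> int) set \<Rightarrow> ('n \<Rightarrow> int) \<Rightarrow> ('n \<Rightarrow> int) \<Rightarrow> 'r::comm_ring_1" where
  "ind L r x = (if x - r \<in> L then 1 else 0)"

lemma per_ind: assumes L: "sublattice L" shows "per L (ind L r :: ('n::finite \<Rightarrow> int) \<Rightarrow> 'r::comm_ring_1)"
  unfolding per_def ind_def
proof (intro allI ballI)
  fix v w assume w: "w \<in> L"
  have "v + w - r \<in> L \<longleftrightarrow> v - r \<in> L"
  proof
    assume "v + w - r \<in> L"
    then have "(v + w - r) - w \<in> L" using sl_diff[OF L _ w] by blast
    then show "v - r \<in> L" by (simp add: algebra_simps)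
  next
    assume "v - r \<in> L"
    then have "(v - r) + w \<in> L" using sl_add[OF L _ w] by blast
    then show "v + w - r \<in> L" by (simp add: algebra_simps)
  qed
  then show "(if v + w - r \<in> L then 1 else 0) = (if v - r \<in> L then 1 else (0::'r))" by simp
qed

lemma per_Dop: assumes "per L f" shows "per L (Dop b f)"
  using assms unfolding per_def Dop_def
proof (intro allI ballI)
  fix v w assume f: "\<forall>v. \<forall>w\<in>L. f (v + w) = f v" and w: "w \<in> L"
  have "f (v + w - u) = f (v - u)" for u using f w by (metis add_diff_eq diff_add_eq)
  then show "(\<Sum>u\<in>Poly_Mapping.keys b. Poly_Mapping.lookup b u * f (v + w - u)) =
         (\<Sum>u\<in>Poly_Mapping.keys b. Poly_Mapping.lookup b u * f (v - u))" by simp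
qed

context
  fixes L :: "('n::finite \<Rightarrow> int) set" and rs :: "('n \<Rightarrow> int) list"
  assumes L: "sublattice L" and rs: "sysrep UNIV L rs"
begin

lemma ind_delta: "i < length rs \<Longrightarrow> j < length rs \<Longrightarrow> ind L (rs ! j) (rs ! i) = (if i = j then 1 else 0)"
  using rs sl_0[OF L] unfolding ind_def sysrep_def by auto

lemma per_expand:
  fixes f :: "('n \<Rightarrow> int) \<Rightarrow> 'r::comm_ring_1"
  assumes f: "per L f"
  shows "f x = (\<Sum>k = 0..<length rs. f (rs ! k) * ind L (rs ! k) x)"
proof -
  obtain k0 where k0: "k0 < length rs" "x - rs ! k0 \<in> L" using rs unfolding sysrep_def by blast
  have eq: "ind L (rs ! k) x = (if k = k0 then 1 else (0::'r))" if "k < length rs" for k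
  proof (cases "x - rs ! k \<in> L")
    case True
    have "rs ! k - rs ! k0 = (x - rs ! k0) - (x - rs ! k)" by simp
    also have "\<dots> \<in> L" using sl_diff[OF L k0(2) True] .
    finally have "k = k0" using rs k0 that unfolding sysrep_def by blast
    then show ?thesis using True by (simp add: ind_def)
  next
    case False
    then have "k \<noteq> k0" using k0 by auto
    then show ?thesis using False by (simp add: ind_def)
  qed
  have "(\<Sum>k = 0..<length rs. f (rs ! k) * ind L (rs ! k) x) = (\<Sum>k = 0..<length rs. if k = k0 then f (rs ! k0) else 0)"
    by (rule sum.cong) (auto simp: eq)
  also have "\<dots> = f (rs ! k0)" using k0 by simp
  also have "\<dots> = f x"
  proof -
    have "f (rs ! k0 + (x - rs ! k0)) = f (rs ! k0)" using f k0 unfolding per_def by blast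
    then show ?thesis by simp
  qed
  finally show ?thesis by simp
qed

definition Mt :: "(('n \<Rightarrow> int) \<Rightarrow>\<^sub>0 'r::comm_ring_1) \<Rightarrow> 'r mat" where
  "Mt b = mat (length rs) (length rs) (\<lambda>(i, j). Dop b (ind L (rs ! j)) (rs ! i))"

lemma Mt_carrier: "Mt b \<in> carrier_mat (length rs) (length rs)"
  by (simp add: Mt_def)

lemma Mt_mult: "Mt (b * c) = Mt b * Mt c"
proof (rule eq_matI)
  fix i j assume i: "i < dim_row (Mt b * Mt c)" and j: "j < dim_col (Mt b * Mt c)"
  then have i': "i < length rs" and j': "j < length rs" by (auto simp: Mt_def)
  have pe: "Dop c (ind L (rs ! j)) = (\<lambda>x. \<Sum>k = 0..<length rs. Dop c (ind L (rs ! j)) (rs ! k) * ind L (rs ! k) x)"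
    by (rule ext, rule per_expand, rule per_Dop, rule per_ind[OF L])
  have "Mt (b * c) $$ (i, j) = Dop b (Dop c (ind L (rs ! j))) (rs ! i)"
    using i' j' by (simp add: Mt_def Dop_mult)
  also have "\<dots> = (\<Sum>k = 0..<length rs. Dop c (ind L (rs ! j)) (rs ! k) * Dop b (ind L (rs ! k)) (rs ! i))"
    by (subst pe, rule Dop_linear_sum)
  also have "\<dots> = (Mt b * Mt c) $$ (i, j)"
    using i' j' by (simp add: Mt_def scalar_prod_def mult.commute)
  finally show "Mt (b * c) $$ (i, j) = (Mt b * Mt c) $$ (i, j)" .
qed (auto simp: Mt_def)

lemma Mt_one: "Mt 1 = 1\<^sub>m (length rs)"
  by (rule eq_matI) (auto simp: Mt_def Dop_one ind_delta)

lemma det_Mt_pow: "det (Mt (b ^ k)) = det (Mt b) ^ k"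
proof (induction k)
  case 0 then show ?case by (simp add: Mt_one)
next
  case (Suc k)
  have "det (Mt (b ^ Suc k)) = det (Mt b * Mt (b ^ k))" by (simp add: Mt_mult)
  also have "\<dots> = det (Mt b) * det (Mt (b ^ k))" by (rule det_mult[OF Mt_carrier Mt_carrier])
  finally show ?case using Suc by simp
qed

end

definition blk :: "nat \<Rightarrow> nat \<Rightarrow> 'a::zero mat \<Rightarrow> 'a mat" where
  "blk m q B = mat (m * q) (m * q) (\<lambda>(x, y). if x div q = y div q then B $$ (x mod q, y mod q) else 0)"

lemma det_blk:
  fixes B :: "'a::idom mat"
  assumes B: "B \<in> carrier_mat q q" and q: "q > 0"
  shows "det (blk m q B) = det B ^ m"
proof (induction m)
  case 0 then show ?case by (simp add: blk_def)
next
  case (Suc m)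
  have e: "blk (Suc m) q B = four_block_mat B (0\<^sub>m q (m * q)) (0\<^sub>m (m * q) q) (blk m q B)"
  proof (rule eq_matI)
    fix x y assume x: "x < dim_row (four_block_mat B (0\<^sub>m q (m * q)) (0\<^sub>m (m * q) q) (blk m q B))"
      and y: "y < dim_col (four_block_mat B (0\<^sub>m q (m * q)) (0\<^sub>m (m * q) q) (blk m q B))"
    then have x': "x < q + m * q" and y': "y < q + m * q" using B by (auto simp: blk_def)
    have dq: "z div q = Suc ((z - q) div q)" "z mod q = (z - q) mod q" if "\<not> z < q" for z
      using that q by (auto simp: div_if mod_if)
    show "blk (Suc m) q B $$ (x, y) = four_block_mat B (0\<^sub>m q (m * q)) (0\<^sub>m (m * q) q) (blk m q B) $$ (x, y)"
      using x' y' B q by (auto simp: blk_def dq)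
  qed (use B in \<open>auto simp: blk_def\<close>)
  have "det (blk (Suc m) q B) = det B * det (blk m q B)"
    unfolding e by (rule det_four_block_mat_lower_left_zero[OF B]) (auto simp: blk_def)
  then show ?case using Suc by simp
qed

lemma fsum_apply: "(sum f A) x = (\<Sum>a\<in>A. f a x)" for f :: "'b \<Rightarrow> 'a \<Rightarrow> 'c::comm_monoid_add"
  by (induction A rule: infinite_finite_induct) auto

lemma vs_fscale: "vector_space (fscale :: 'k::field \<Rightarrow> ('a \<Rightarrow> 'k) \<Rightarrow> ('a \<Rightarrow> 'k))"
  by unfold_locales (auto simp: fscale_def fun_eq_iff algebra_simps)

lemma charpoly_on_basis:
  fixes V :: "('a \<Rightarrow> 'k::field) set" and T :: "('a \<Rightarrow> 'k) \<Rightarrow> ('a \<Rightarrow> 'k)"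
    and bs :: "('a \<Rightarrow> 'k) list" and rs :: "'a list"
  assumes len: "length rs = length bs"
    and subV: "module.subspace fscale V"
    and bsV: "\<And>j. j < length bs \<Longrightarrow> bs ! j \<in> V"
    and delta: "\<And>i j. i < length bs \<Longrightarrow> j < length bs \<Longrightarrow> (bs ! j) (rs ! i) = (if i = j then 1 else 0)"
    and expn: "\<And>f x. f \<in> V \<Longrightarrow> f x = (\<Sum>k = 0..<length bs. f (rs ! k) * (bs ! k) x)"
    and TV: "\<And>f. f \<in> V \<Longrightarrow> T f \<in> V"
    and Tadd: "\<And>f g. T (f + g) = T f + T g"
    and Tscale: "\<And>c f. T (fscale c f) = fscale c (T f)"
  shows "charpoly_on V T = char_poly (mat (length bs) (length bs) (\<lambda>(i, j). T (bs ! j) (rs ! i)))"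
proof -
  interpret vs: vector_space "fscale :: 'k \<Rightarrow> ('a \<Rightarrow> 'k) \<Rightarrow> ('a \<Rightarrow> 'k)" by (rule vs_fscale)
  let ?n = "length bs"
  have T0: "T 0 = 0"
  proof -
    have "T (fscale 0 0) = fscale 0 (T 0)" by (rule Tscale)
    then show ?thesis by (simp add: fscale_def func_zero)
  qed
  have Tsum: "T (\<Sum>k\<in>K. fscale (c k) (v k)) = (\<Sum>k\<in>K. fscale (c k) (T (v k)))" for K c v
  proof (induction K rule: infinite_finite_induct)
    case (infinite A)
    then have "(\<Sum>k\<in>A. fscale (c k) (v k)) = 0" "(\<Sum>k\<in>A. fscale (c k) (T (v k))) = 0" by auto
    then show ?case using T0 by metis
  next
    case empty then show ?case by (simp only: sum.empty T0)
  next
    case (insert x F) then show ?case by (simp only: sum.insert[OF insert(1,2)] Tadd Tscale insert(3))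
  qed
  have E: "f = (\<Sum>k = 0..<?n. fscale (f (rs ! k)) (bs ! k))" if "f \<in> V" for f
  proof (rule ext)
    fix x
    have "f x = (\<Sum>k = 0..<?n. f (rs ! k) * (bs ! k) x)" by (rule expn[OF that])
    also have "\<dots> = (\<Sum>k = 0..<?n. fscale (f (rs ! k)) (bs ! k)) x" by (simp add: fsum_apply fscale_def)
    finally show "f x = (\<Sum>k = 0..<?n. fscale (f (rs ! k)) (bs ! k)) x" .
  qed
  have dist: "distinct bs"
    unfolding distinct_conv_nth
  proof (intro allI impI)
    fix i j assume ij: "i < ?n" "j < ?n" "i \<noteq> j"
    show "bs ! i \<noteq> bs ! j"
    proof
      assume "bs ! i = bs ! j"
      then have "(bs ! i) (rs ! i) = (bs ! j) (rs ! i)" by simp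
      then show False using delta[of i i] delta[of i j] ij by simp
    qed
  qed
  have ind: "\<not> vs.dependent (set bs)"
  proof
    assume "vs.dependent (set bs)"
    then obtain t u where tu: "finite t" "t \<subseteq> set bs" "(\<Sum>v\<in>t. fscale (u v) v) = 0" "\<exists>v\<in>t. u v \<noteq> 0"
      unfolding vs.dependent_explicit by blast
    then obtain v where v: "v \<in> t" "u v \<noteq> 0" by blast
    have "v \<in> set bs" using v tu(2) by blast
    then obtain i where i: "i < ?n" "v = bs ! i" by (metis in_set_conv_nth)
    have "0 = (\<Sum>w\<in>t. fscale (u w) w) (rs ! i)" using tu(3) by simp
    also have "\<dots> = (\<Sum>w\<in>t. u w * w (rs ! i))" by (simp add: fsum_apply fscale_def)
    also have "\<dots> = (\<Sum>w\<in>t. if w = v then u v else 0)"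
    proof (rule sum.cong)
      fix w assume w: "w \<in> t"
      have "w \<in> set bs" using w tu(2) by blast
      then obtain j where j: "j < ?n" "w = bs ! j" by (metis in_set_conv_nth)
      have "w = v \<longleftrightarrow> j = i" using i j dist by (simp add: nth_eq_iff_index_eq)
      then show "u w * w (rs ! i) = (if w = v then u v else 0)" using delta[of i j] i j by auto
    qed simp
    also have "\<dots> = u v" using v tu(1) by simp
    finally show False using v by simp
  qed
  have spanV: "vs.span (set bs) = V"
  proof
    show "vs.span (set bs) \<subseteq> V"
      by (rule vs.span_minimal[OF _ subV]) (auto simp: in_set_conv_nth intro: bsV)
    show "V \<subseteq> vs.span (set bs)"
    proof
      fix f assume f: "f \<in> V"
      have "(\<Sum>k = 0..<?n. fscale (f (rs ! k)) (bs ! k)) \<in> vs.span (set bs)"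
        by (intro vs.span_sum vs.span_scale vs.span_base) simp
      then show "f \<in> vs.span (set bs)" using E[OF f] by simp
    qed
  qed
  define P where "P bs' \<longleftrightarrow> distinct bs' \<and> \<not> vs.dependent (set bs') \<and> vs.span (set bs') = V" for bs'
  define bs0 where "bs0 = (SOME bs'. P bs')"
  have P0: "P bs0" unfolding bs0_def by (rule someI[of P bs]) (use dist ind spanV in \<open>simp add: P_def\<close>)
  have dist0: "distinct bs0" and ind0: "\<not> vs.dependent (set bs0)" and span0: "vs.span (set bs0) = V"
    using P0 by (auto simp: P_def)
  have bs0V: "set bs0 \<subseteq> V" using vs.span_superset span0 by blast
  have "card (set bs0) = vs.dim V"
    by (rule vs.basis_card_eq_dim[OF bs0V]) (use span0 ind0 in auto)
  moreover have "card (set bs) = vs.dim V"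
    by (rule vs.basis_card_eq_dim) (use spanV ind bsV in \<open>auto simp: in_set_conv_nth\<close>)
  ultimately have len0: "length bs0 = ?n" using distinct_card[OF dist0] distinct_card[OF dist] by simp
  have bs0i: "bs0 ! i \<in> V" if "i < ?n" for i using bs0V len0 that nth_mem by fastforce
  define rep0 where "rep0 = vs.representation (set bs0)"
  have setc: "set bs0 = (\<lambda>k. bs0 ! k) ` {0..<?n}" using len0 by (auto simp: set_conv_nth)
  have R1: "v = (\<Sum>k = 0..<?n. fscale (rep0 v (bs0 ! k)) (bs0 ! k))" if "v \<in> V" for v
  proof -
    have "(\<Sum>b\<in>set bs0. fscale (rep0 v b) b) = v"
      unfolding rep0_def by (rule vs.sum_representation_eq) (use ind0 span0 that in auto)
    moreover have "(\<Sum>b\<in>set bs0. fscale (rep0 v b) b) = (\<Sum>k = 0..<?n. fscale (rep0 v (bs0 ! k)) (bs0 ! k))"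
      unfolding setc by (rule sum.reindex_cong[OF _ refl refl]) (use dist0 len0 in \<open>auto simp: inj_on_def nth_eq_iff_index_eq\<close>)
    ultimately show ?thesis by simp
  qed
  have R2: "rep0 (\<Sum>k\<in>K. fscale (c k) (v k)) b = (\<Sum>k\<in>K. c k * rep0 (v k) b)"
    if "\<And>k. k \<in> K \<Longrightarrow> v k \<in> V" for K c v b
  proof -
    have "rep0 (\<Sum>k\<in>K. fscale (c k) (v k)) = (\<lambda>b. \<Sum>k\<in>K. rep0 (fscale (c k) (v k)) b)"
      unfolding rep0_def by (rule vs.representation_sum) (use ind0 span0 that in \<open>auto intro: vs.span_scale\<close>)
    also have "\<dots> = (\<lambda>b. \<Sum>k\<in>K. c k * rep0 (v k) b)"
      unfolding rep0_def by (intro ext sum.cong refl, subst vs.representation_scale) (use ind0 span0 that in auto)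
    finally show ?thesis by simp
  qed
  have R2': "rep0 (\<Sum>k = 0..<?n. fscale (c k) (bs ! k)) b = (\<Sum>k = 0..<?n. c k * rep0 (bs ! k) b)" for c b
    by (rule R2) (simp add: bsV)
  have R3: "rep0 (bs0 ! j) (bs0 ! i) = (if i = j then 1 else 0)" if "i < ?n" "j < ?n" for i j
  proof -
    have "rep0 (bs0 ! j) = (\<lambda>v. if v = bs0 ! j then 1 else 0)"
      unfolding rep0_def by (rule vs.representation_basis) (use ind0 that len0 in auto)
    then show ?thesis using that dist0 len0 by (simp add: nth_eq_iff_index_eq)
  qed
  define M0 where "M0 = mat ?n ?n (\<lambda>(i, j). rep0 (T (bs0 ! j)) (bs0 ! i))"
  define M where "M = mat ?n ?n (\<lambda>(i, j). T (bs ! j) (rs ! i))"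
  define S where "S = mat ?n ?n (\<lambda>(i, j). rep0 (bs ! j) (bs0 ! i))"
  define S' where "S' = mat ?n ?n (\<lambda>(i, j). (bs0 ! j) (rs ! i))"
  have cp: "charpoly_on V T = char_poly M0"
    unfolding charpoly_on_def Let_def M0_def rep0_def
    using len0 by (simp add: bs0_def P_def)
  have SS': "S * S' = 1\<^sub>m ?n"
  proof (rule eq_matI)
    fix i j assume "i < dim_row (1\<^sub>m ?n)" "j < dim_col (1\<^sub>m ?n)"
    then have ij: "i < ?n" "j < ?n" by auto
    have "(S * S') $$ (i, j) = (\<Sum>k = 0..<?n. (bs0 ! j) (rs ! k) * rep0 (bs ! k) (bs0 ! i))"
      using ij by (simp add: S_def S'_def scalar_prod_def mult.commute)
    also have "\<dots> = rep0 (\<Sum>k = 0..<?n. fscale ((bs0 ! j) (rs ! k)) (bs ! k)) (bs0 ! i)"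
      by (rule R2'[symmetric])
    also have "\<dots> = rep0 (bs0 ! j) (bs0 ! i)" using E[OF bs0i[OF ij(2)]] by simp
    also have "\<dots> = 1\<^sub>m ?n $$ (i, j)" using R3[OF ij] ij by simp
    finally show "(S * S') $$ (i, j) = 1\<^sub>m ?n $$ (i, j)" .
  qed (auto simp: S_def S'_def)
  have S'S: "S' * S = 1\<^sub>m ?n"
  proof (rule eq_matI)
    fix i j assume "i < dim_row (1\<^sub>m ?n)" "j < dim_col (1\<^sub>m ?n)"
    then have ij: "i < ?n" "j < ?n" by auto
    have "(S' * S) $$ (i, j) = (\<Sum>k = 0..<?n. rep0 (bs ! j) (bs0 ! k) * (bs0 ! k) (rs ! i))"
      using ij by (simp add: S_def S'_def scalar_prod_def mult.commute)
    also have "\<dots> = (\<Sum>k = 0..<?n. fscale (rep0 (bs ! j) (bs0 ! k)) (bs0 ! k)) (rs ! i)"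
      by (simp add: fsum_apply fscale_def)
    also have "\<dots> = (bs ! j) (rs ! i)" using R1[OF bsV[OF ij(2)]] by simp
    also have "\<dots> = 1\<^sub>m ?n $$ (i, j)" using delta[OF ij] ij by simp
    finally show "(S' * S) $$ (i, j) = 1\<^sub>m ?n $$ (i, j)" .
  qed (auto simp: S_def S'_def)
  have MS': "M * S' = mat ?n ?n (\<lambda>(k, j). T (bs0 ! j) (rs ! k))"
  proof (rule eq_matI)
    fix k j assume "k < dim_row (mat ?n ?n (\<lambda>(k, j). T (bs0 ! j) (rs ! k)))"
      "j < dim_col (mat ?n ?n (\<lambda>(k, j). T (bs0 ! j) (rs ! k)))"
    then have kj: "k < ?n" "j < ?n" by auto
    have "(M * S') $$ (k, j) = (\<Sum>l = 0..<?n. (bs0 ! j) (rs ! l) * T (bs ! l) (rs ! k))"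
      using kj by (simp add: M_def S'_def scalar_prod_def mult.commute)
    also have "\<dots> = (\<Sum>l = 0..<?n. fscale ((bs0 ! j) (rs ! l)) (T (bs ! l))) (rs ! k)"
      by (simp add: fsum_apply fscale_def)
    also have "\<dots> = T (\<Sum>l = 0..<?n. fscale ((bs0 ! j) (rs ! l)) (bs ! l)) (rs ! k)"
      by (simp add: Tsum)
    also have "\<dots> = T (bs0 ! j) (rs ! k)" using E[OF bs0i[OF kj(2)]] by simp
    finally show "(M * S') $$ (k, j) = mat ?n ?n (\<lambda>(k, j). T (bs0 ! j) (rs ! k)) $$ (k, j)"
      using kj by simp
  qed (auto simp: M_def S'_def)
  have SMS': "S * (M * S') = M0"
  proof (rule eq_matI)
    fix i j assume "i < dim_row M0" "j < dim_col M0"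
    then have ij: "i < ?n" "j < ?n" by (auto simp: M0_def)
    have "(S * (M * S')) $$ (i, j) = (\<Sum>k = 0..<?n. T (bs0 ! j) (rs ! k) * rep0 (bs ! k) (bs0 ! i))"
      using ij by (simp add: MS' S_def scalar_prod_def mult.commute)
    also have "\<dots> = rep0 (\<Sum>k = 0..<?n. fscale (T (bs0 ! j) (rs ! k)) (bs ! k)) (bs0 ! i)"
      by (rule R2'[symmetric])
    also have "\<dots> = rep0 (T (bs0 ! j)) (bs0 ! i)" using E[OF TV[OF bs0i[OF ij(2)]]] by simp
    finally show "(S * (M * S')) $$ (i, j) = M0 $$ (i, j)" using ij by (simp add: M0_def)
  qed (auto simp: M0_def S_def MS')
  have "similar_mat M0 M"
  proof (rule similar_matI[of _ _ S S' ?n])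
    show "{M0, M, S, S'} \<subseteq> carrier_mat ?n ?n" by (auto simp: M0_def M_def S_def S'_def)
    show "S * S' = 1\<^sub>m ?n" by (rule SS')
    show "S' * S = 1\<^sub>m ?n" by (rule S'S)
    show "M0 = S * M * S'"
      using SMS' assoc_mult_mat[of S ?n ?n M ?n S' ?n] by (simp add: S_def M_def S'_def)
  qed
  then have "char_poly M0 = char_poly M" by (rule char_poly_similar)
  then show ?thesis using cp by (simp add: M_def)
qed

lemma const_poly_add: "[:a + b:] = [:a:] + [:b:]"
  by simp

lemma const_poly_sum: "[:sum f A:] = (\<Sum>x\<in>A. [:f x:])"
  by (induction A rule: infinite_finite_induct) (simp_all del: add_pCons add: const_poly_add)

lemma periodic_per: "periodic_funs L = {f. per L f}"
  by (simp add: periodic_funs_def per_def)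

lemma sub_per: "module.subspace (fscale :: 'k::field \<Rightarrow> _) (periodic_funs (L :: ('n::finite \<Rightarrow> int) set))"
proof -
  interpret vs: vector_space "fscale :: 'k \<Rightarrow> (('n \<Rightarrow> int) \<Rightarrow> 'k) \<Rightarrow> _" by (rule vs_fscale)
  show ?thesis unfolding vs.subspace_def periodic_funs_def fscale_def by auto
qed

lemma charpoly_on_Mt:
  fixes a :: "('n::finite \<Rightarrow> int) \<Rightarrow> 'k::field"
  assumes L: "sublattice L" and rs: "sysrep UNIV L rs" and a: "fin_supp a"
  shows "charpoly_on (periodic_funs L) (\<lambda>f. conv f a) = char_poly (Mt L rs (Abs_poly_mapping a))"
proof -
  let ?bs = "map (\<lambda>r. ind L r :: ('n \<Rightarrow> int) \<Rightarrow> 'k) rs"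
  have "charpoly_on (periodic_funs L) (\<lambda>f. conv f a) =
      char_poly (mat (length ?bs) (length ?bs) (\<lambda>(i, j). conv (?bs ! j) a (rs ! i)))"
  proof (rule charpoly_on_basis)
    show "length rs = length ?bs" by simp
    show "module.subspace fscale (periodic_funs L)" by (rule sub_per)
    show "?bs ! j \<in> periodic_funs L" if "j < length ?bs" for j
      using that per_ind[OF L] by (simp add: periodic_per)
    show "(?bs ! j) (rs ! i) = (if i = j then 1 else 0)" if "i < length ?bs" "j < length ?bs" for i j
      using that ind_delta[OF L rs, of i j] by simp
    show "f x = (\<Sum>k = 0..<length ?bs. f (rs ! k) * (?bs ! k) x)" if "f \<in> periodic_funs L" for f x
      using per_expand[OF L rs, of f x] that by (simp add: periodic_per)
    show "(\<lambda>f. conv f a) f \<in> periodic_funs L" if "f \<in> periodic_funs L" for f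
    proof -
      have "conv f a = Dop (Abs_poly_mapping a) f" by (rule ext, rule conv_Dop[OF a])
      then show ?thesis using per_Dop that by (simp add: periodic_per)
    qed
    show "(\<lambda>f. conv f a) (f + g) = (\<lambda>f. conv f a) f + (\<lambda>f. conv f a) g" for f g
      by (rule ext) (simp add: conv_def distrib_right sum.distrib)
    show "(\<lambda>f. conv f a) (fscale c f) = fscale c ((\<lambda>f. conv f a) f)" for c f
      by (rule ext) (simp add: conv_def fscale_def sum_distrib_left mult.assoc)
  qed
  also have "mat (length ?bs) (length ?bs) (\<lambda>(i, j). conv (?bs ! j) a (rs ! i)) = Mt L rs (Abs_poly_mapping a)"
    by (rule eq_matI) (auto simp: Mt_def[OF L rs] conv_Dop[OF a])
  finally show ?thesis .
qed

definition liftb :: "(('n::finite \<Rightarrow> int) \<Rightarrow> 'k::field) \<Rightarrow> ('n \<Rightarrow> int) \<Rightarrow>\<^sub>0 'k poly" where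
  "liftb a = Poly_Mapping.single 0 [:0, 1:] + Abs_poly_mapping (\<lambda>u. [:- a u:])"

lemma char_poly_Mt:
  fixes a :: "('n::finite \<Rightarrow> int) \<Rightarrow> 'k::field"
  assumes L: "sublattice L" and rs: "sysrep UNIV L rs" and a: "fin_supp a"
  shows "char_poly (Mt L rs (Abs_poly_mapping a)) = det (Mt L rs (liftb a))"
proof -
  have fin: "finite {u. a u \<noteq> 0}" using a by (simp add: fin_supp_def)
  have fin2: "finite {u. [:- a u:] \<noteq> 0}" using fin by simp
  have lk: "Poly_Mapping.lookup (Abs_poly_mapping a) = a" using fin by simp
  have lk2: "Poly_Mapping.lookup (Abs_poly_mapping (\<lambda>u. [:- a u:])) = (\<lambda>u. [:- a u:])" using fin2 by simp
  have ks: "Poly_Mapping.keys (Abs_poly_mapping a) = {u. a u \<noteq> 0}" by (auto simp: in_keys_iff lk)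
  have ks2: "Poly_Mapping.keys (Abs_poly_mapping (\<lambda>u. [:- a u:])) = {u. a u \<noteq> 0}" by (auto simp: in_keys_iff lk2)
  have indp: "(ind L r x :: 'k poly) = [:ind L r x:]" for r x by (simp add: ind_def)
  have "Mt L rs (liftb a) = char_poly_matrix (Mt L rs (Abs_poly_mapping a))"
  proof (rule eq_matI)
    fix i j assume "i < dim_row (char_poly_matrix (Mt L rs (Abs_poly_mapping a)))"
      "j < dim_col (char_poly_matrix (Mt L rs (Abs_poly_mapping a)))"
    then have ij: "i < length rs" "j < length rs" by (auto simp: char_poly_matrix_def Mt_def[OF L rs])
    have "Mt L rs (liftb a) $$ (i, j) = Dop (liftb a) (ind L (rs ! j)) (rs ! i)" using ij by (simp add: Mt_def[OF L rs])
    also have "\<dots> = [:0, 1:] * ind L (rs ! j) (rs ! i) +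
        (\<Sum>u\<in>{u. a u \<noteq> 0}. [:- a u:] * ind L (rs ! j) (rs ! i - u))"
      unfolding liftb_def Dop_add Dop_single by (simp add: Dop_def ks2 lk2)
    also have "\<dots> = [:0, 1:] * (if i = j then 1 else 0) +
        [:- (\<Sum>u\<in>{u. a u \<noteq> 0}. a u * ind L (rs ! j) (rs ! i - u)):]"
    proof -
      have A: "(ind L (rs ! j) (rs ! i) :: 'k poly) = (if i = j then 1 else 0)"
        using ind_delta[OF L rs ij] .
      have "(\<Sum>u\<in>{u. a u \<noteq> 0}. [:- a u:] * (ind L (rs ! j) (rs ! i - u) :: 'k poly))
          = (\<Sum>u\<in>{u. a u \<noteq> 0}. [:- (a u * ind L (rs ! j) (rs ! i - u)):])"
        by (rule sum.cong) (simp_all add: indp)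
      also have "\<dots> = [:\<Sum>u\<in>{u. a u \<noteq> 0}. - (a u * ind L (rs ! j) (rs ! i - u)):]"
        by (simp only: const_poly_sum)
      also have "\<dots> = [:- (\<Sum>u\<in>{u. a u \<noteq> 0}. a u * ind L (rs ! j) (rs ! i - u)):]"
        by (simp add: sum_negf)
      finally show ?thesis using A by simp
    qed
    also have "\<dots> = char_poly_matrix (Mt L rs (Abs_poly_mapping a)) $$ (i, j)"
      using ij by (simp add: char_poly_matrix_def Mt_def[OF L rs] Dop_def ks lk)
    finally show "Mt L rs (liftb a) $$ (i, j) = char_poly_matrix (Mt L rs (Abs_poly_mapping a)) $$ (i, j)" .
  qed (auto simp: char_poly_matrix_def Mt_def[OF L rs])
  then show ?thesis by (simp add: char_poly_def)
qed

lemma Mt_block: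
  fixes c :: "('n::finite \<Rightarrow> int) \<Rightarrow>\<^sub>0 'r::comm_ring_1"
  assumes L: "sublattice L'" and L2: "sublattice L2" and LQ: "sublattice LQ"
    and s12: "L' \<subseteq> L2" and s1Q: "L' \<subseteq> LQ"
    and cap: "\<And>v. v \<in> L2 \<Longrightarrow> v \<in> LQ \<Longrightarrow> v \<in> L'"
    and s: "sysrep UNIV LQ s" and t: "sysrep LQ L' t" and t2: "sysrep UNIV L2 t"
    and q: "length t = q" "q > 0"
    and st: "st = map (\<lambda>x. s ! (x div q) + t ! (x mod q)) [0..<length s * q]"
    and kc: "Poly_Mapping.keys c \<subseteq> LQ"
  shows "Mt L' st c = blk (length s) q (Mt L2 t c)"
proof -
  have stsys: "sysrep UNIV L' st"
    unfolding st by (rule tower_rep[OF L LQ s1Q _ s t q]) auto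
  have lst: "length st = length s * q" using st by simp
  show ?thesis
  proof (rule eq_matI)
    fix x y assume "x < dim_row (blk (length s) q (Mt L2 t c))" "y < dim_col (blk (length s) q (Mt L2 t c))"
    then have xy: "x < length s * q" "y < length s * q" by (auto simp: blk_def)
    have dm: "z div q < length s" "z mod q < q" if "z < length s * q" for z
      using that q by (auto simp: less_mult_imp_div_less)
    have stx: "st ! z = s ! (z div q) + t ! (z mod q)" if "z < length s * q" for z
      using that st by simp
    have tQ: "t ! z \<in> LQ" if "z < q" for z using sysrep_nth[OF t] that q by simp
    have lhs: "Mt L' st c $$ (x, y) = (\<Sum>u\<in>Poly_Mapping.keys c. Poly_Mapping.lookup c u *
        ind L' (st ! y) (st ! x - u))"
      using xy lst by (simp add: Mt_def[OF L stsys] Dop_def)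
    have trm: "st ! x - u - st ! y = (s ! (x div q) - s ! (y div q)) + (t ! (x mod q) - t ! (y mod q) - u)" for u
      using stx[OF xy(1)] stx[OF xy(2)] by (simp add: algebra_simps)
    have wQ: "t ! (x mod q) - t ! (y mod q) - u \<in> LQ" if "u \<in> LQ" for u
      using sl_diff[OF LQ sl_diff[OF LQ tQ[OF dm(2)[OF xy(1)]] tQ[OF dm(2)[OF xy(2)]]] that] .
    show "Mt L' st c $$ (x, y) = blk (length s) q (Mt L2 t c) $$ (x, y)"
    proof (cases "x div q = y div q")
      case False
      have "ind L' (st ! y) (st ! x - u) = (0::'r)" if "u \<in> Poly_Mapping.keys c" for u
      proof (rule ccontr)
        assume "ind L' (st ! y) (st ! x - u) \<noteq> (0::'r)"
        then have "st ! x - u - st ! y \<in> L'" by (auto simp: ind_def split: if_splits)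
        then have "(s ! (x div q) - s ! (y div q)) + (t ! (x mod q) - t ! (y mod q) - u) \<in> LQ"
          using trm s1Q by auto
        then have "s ! (x div q) - s ! (y div q) \<in> LQ"
          using sl_diff[OF LQ _ wQ[of u]] that kc by force
        then show False using s False dm xy unfolding sysrep_def by blast
      qed
      then have "Mt L' st c $$ (x, y) = 0" using lhs by simp
      then show ?thesis using xy False by (simp add: blk_def)
    next
      case True
      have "Mt L' st c $$ (x, y) = (\<Sum>u\<in>Poly_Mapping.keys c. Poly_Mapping.lookup c u *
          ind L2 (t ! (y mod q)) (t ! (x mod q) - u))"
        unfolding lhs
      proof (rule sum.cong[OF refl])
        fix u assume u: "u \<in> Poly_Mapping.keys c"
        have w: "st ! x - u - st ! y = t ! (x mod q) - u - t ! (y mod q)" using trm True by (simp add: algebra_simps)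
        have iff: "t ! (x mod q) - u - t ! (y mod q) \<in> L' \<longleftrightarrow> t ! (x mod q) - u - t ! (y mod q) \<in> L2"
          using cap s12 wQ[of u] u kc by (auto simp: algebra_simps diff_diff_eq2)
        show "Poly_Mapping.lookup c u * ind L' (st ! y) (st ! x - u) =
            Poly_Mapping.lookup c u * ind L2 (t ! (y mod q)) (t ! (x mod q) - u)"
          unfolding ind_def w using iff by simp
      qed
      also have "\<dots> = Mt L2 t c $$ (x mod q, y mod q)"
        using dm xy q by (simp add: Mt_def[OF L2 t2] Dop_def)
      also have "\<dots> = blk (length s) q (Mt L2 t c) $$ (x, y)"
        using xy True by (simp add: blk_def)
      finally show ?thesis .
    qed
  qed (use q lst in \<open>auto simp: blk_def Mt_def[OF L stsys] Mt_def[OF L2 t2]\<close>)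
qed

lemma main_a:
  fixes a :: "('n::finite \<Rightarrow> int) \<Rightarrow> 'k::field"
  assumes p: "prime p" and z: "of_nat p = (0::'k)"
    and L: "sublattice L'" and L2: "sublattice L2" and LQ: "sublattice LQ"
    and s12: "L' \<subseteq> L2" and s1Q: "L' \<subseteq> LQ"
    and capset: "L2 \<inter> LQ \<subseteq> L'"
    and mQ: "\<And>v. of_nat (p ^ \<alpha>) * v \<in> LQ"
    and s: "sysrep UNIV LQ s" and ls: "length s = p ^ \<alpha>"
    and t: "sysrep LQ L' t" and t2: "sysrep UNIV L2 t"
    and q: "length t = q" "q > 0"
    and a: "fin_supp a"
  shows "charpoly_on (periodic_funs L') (\<lambda>f. conv f a) = (charpoly_on (periodic_funs L2) (\<lambda>f. conv f a)) ^ (p ^ \<alpha>)"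
proof -
  have cap: "\<And>v. v \<in> L2 \<Longrightarrow> v \<in> LQ \<Longrightarrow> v \<in> L'" using capset by blast
  define st where "st = map (\<lambda>x. s ! (x div q) + t ! (x mod q)) [0..<length s * q]"
  have stsys: "sysrep UNIV L' st"
    unfolding st_def by (rule tower_rep[OF L LQ s1Q _ s t q]) auto
  let ?m = "p ^ \<alpha>"
  define b where "b = liftb a"
  have zP: "of_nat p = (0 :: 'k poly)" using z by (simp add: of_nat_poly)
  have kb: "Poly_Mapping.keys (b ^ ?m) \<subseteq> LQ"
    using keys_frob[OF p zP, of b \<alpha>] mQ by auto
  have c1: "charpoly_on (periodic_funs L') (\<lambda>f. conv f a) = det (Mt L' st b)"
    using charpoly_on_Mt[OF L stsys a] char_poly_Mt[OF L stsys a] by (simp add: b_def)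
  have c2: "charpoly_on (periodic_funs L2) (\<lambda>f. conv f a) = det (Mt L2 t b)"
    using charpoly_on_Mt[OF L2 t2 a] char_poly_Mt[OF L2 t2 a] by (simp add: b_def)
  have "det (Mt L' st b) ^ ?m = det (Mt L' st (b ^ ?m))"
    by (rule det_Mt_pow[OF L stsys, symmetric])
  also have "Mt L' st (b ^ ?m) = blk (length s) q (Mt L2 t (b ^ ?m))"
    by (rule Mt_block[OF L L2 LQ s12 s1Q cap s t t2 q st_def kb])
  also have "det \<dots> = det (Mt L2 t (b ^ ?m)) ^ length s"
    by (rule det_blk) (use Mt_carrier[OF L2 t2] q in auto)
  also have "\<dots> = (det (Mt L2 t b) ^ ?m) ^ ?m"
    using det_Mt_pow[OF L2 t2, of b ?m] ls by simp
  finally have "det (Mt L' st b) ^ ?m = (det (Mt L2 t b) ^ ?m) ^ ?m" .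
  then have "det (Mt L' st b) = det (Mt L2 t b) ^ ?m" by (rule frob_cancel[OF p zP])
  then show ?thesis using c1 c2 by simp
qed

lemma Gcd_pow:
  fixes S :: "'k::field_gcd poly set"
  assumes "finite S" "n > 0"
  shows "Gcd ((\<lambda>x. x ^ n) ` S) = (Gcd S) ^ n"
  using assms by (induction S rule: finite_induct) auto

theorem corollary1p5:
  fixes L' :: "('n::finite \<Rightarrow> int) set"
    and p q \<alpha> :: nat
  assumes "CHAR('k::field_gcd) = p" and "p > 0"
    and "sublattice L'"
    and "lat_index L' = p ^ \<alpha> * q"
    and "\<not> p dvd q"
  shows "(\<exists>!L''. sublattice L'' \<and> lat_index L'' = q \<and> L' \<subseteq> L'')
       \<and> (\<forall>L''. sublattice L'' \<and> lat_index L'' = q \<and> L' \<subseteq> L'' \<longrightarrow>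
            (\<forall>as :: ((('n \<Rightarrow> int) \<Rightarrow> 'k) list). as \<noteq> [] \<and> (\<forall>a\<in>set as. fin_supp a) \<longrightarrow>
               CharPoly as L' = (CharPoly as L'') ^ (p ^ \<alpha>)))"
proof -
  have p: "prime p" using assms(1,2) prime_CHAR_semidom[where ?'a = 'k] by simp
  have z: "of_nat p = (0::'k)" using assms(1) of_nat_CHAR[where ?'a = 'k] by simp
  define L2 where "L2 = {v. of_nat (p ^ \<alpha>) * v \<in> L'}"
  define LQ where "LQ = {v. of_nat q * v \<in> L'}"
  note P = part1[OF assms(3) assms(4) p refl assms(5), folded L2_def LQ_def]

  obtain s t where st: "sysrep UNIV LQ s" "length s = p ^ \<alpha>" "sysrep LQ L' t" "sysrep UNIV L2 t" "length t = q"
    using P(7) by blast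
  have q0: "q > 0" using assms(5) by (metis dvd_0_right gr0I)
  show ?thesis
  proof (intro conjI allI impI)
    show "\<exists>!L''. sublattice L'' \<and> lat_index L'' = q \<and> L' \<subseteq> L''"
      by (rule ex1I[of _ L2]) (use P(1,2,8,9) in blast)+
  next
    fix L'' and as :: "(('n \<Rightarrow> int) \<Rightarrow> 'k) list"
    assume H: "sublattice L'' \<and> lat_index L'' = q \<and> L' \<subseteq> L''"
      and as: "as \<noteq> [] \<and> (\<forall>a\<in>set as. fin_supp a)"
    have LL: "L'' = L2" using P(9) H by blast
    have each: "charpoly_on (periodic_funs L') (\<lambda>f. conv f a) = (charpoly_on (periodic_funs L2) (\<lambda>f. conv f a)) ^ (p ^ \<alpha>)"
      if "a \<in> set as" for a
    proof -
      have "fin_supp a" using as that by blast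
      moreover have "L2 \<inter> LQ \<subseteq> L'" using P(5) by blast
      ultimately show ?thesis by (intro main_a[OF p z assms(3) P(1) P(3) P(2) P(4) _ P(6) st(1,2,3,4,5) q0])
    qed
    have "set (map (\<lambda>a. charpoly_on (periodic_funs L') (\<lambda>f. conv f a)) as) =
        (\<lambda>x. x ^ (p ^ \<alpha>)) ` set (map (\<lambda>a. charpoly_on (periodic_funs L2) (\<lambda>f. conv f a)) as)"
      using each by (auto simp: image_image)
    then have "CharPoly as L' = Gcd ((\<lambda>x. x ^ (p ^ \<alpha>)) ` set (map (\<lambda>a. charpoly_on (periodic_funs L2) (\<lambda>f. conv f a)) as))"
      by (simp add: CharPoly_def)
    also have "\<dots> = (CharPoly as L2) ^ (p ^ \<alpha>)"
      unfolding CharPoly_def by (rule Gcd_pow) (use p prime_gt_0_nat in auto)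
    finally show "CharPoly as L' = (CharPoly as L'') ^ (p ^ \<alpha>)" using LL by simp
  qed
qed

end
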